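(* Define polynomials in one variable $m$ by \[{}^{\mathsf{NF}}\!P_0(m)=m,\qquad {}^{\mathsf{NF}}\!P_{n+1}(m)={}^{\mathsf{NF}}\!P_n(m+1)+{}^{\mathsf{NF}}\!Q_{n+1}(m),\] \[{}^{\mathsf{NF}}\!Q_0(m)=m,\qquad {}^{\mathsf{NF}}\!Q_{n+1}(m)=\sum_{k=0}^{n}{}^{\mathsf{NF}}\!P_k(m)\,{}^{\mathsf{NF}}\!Q_{n-k}(m).\] Then for every $n\ge 0$, the degrees of ${}^{\mathsf{NF}}\!P_n$ and of ${}^{\mathsf{NF}}\!Q_n$ are both equal to $n+1$.
   Context: ${}^{\mathsf{NF}}\!P_n(m)$ counts beta-normal forms of size $n$ (de Bruijn indices of size $0$, abstraction and application of size $1$) with at most $m$ distinct free indices, and ${}^{\mathsf{NF}}\!Q_n(m)$ counts neutral normal forms (those headed by an index) of size $n$ with at most $m$ distinct free indices; this interpretation is not needed for the claim. *)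

theory Defs
  imports "HOL-Computational_Algebra.Polynomial"
begin

function NFP :: "nat \<Rightarrow> int poly" and NFQ :: "nat \<Rightarrow> int poly" where
  "NFP 0 = [:0, 1:]"
| "NFP (Suc n) = pcompose (NFP n) [:1, 1:] + NFQ (Suc n)"
| "NFQ 0 = [:0, 1:]"
| "NFQ (Suc n) = (\<Sum>k\<le>n. NFP k * NFQ (n - k))"
  by pat_completeness auto
termination
  by (relation "measure (\<lambda>x. case x of Inl n \<Rightarrow> 2 * n + 1 | Inr n \<Rightarrow> 2 * n)") auto

end

theory Submission
  imports Defs
begin

lemma sum_deg:
  fixes f :: "nat \<Rightarrow> int poly"
  assumes "\<And>k. k \<le> n \<Longrightarrow> degree (f k) = d \<and> lead_coeff (f k) > 0"
  shows "degree (\<Sum>k\<le>n. f k) = d \<and> lead_coeff (\<Sum>k\<le>n. f k) > 0"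
proof -
  have le: "degree (\<Sum>k\<le>n. f k) \<le> d"
    by (rule degree_sum_le) (use assms in auto)
  have c: "coeff (\<Sum>k\<le>n. f k) d = (\<Sum>k\<le>n. coeff (f k) d)" by (simp add: coeff_sum)
  have "(\<Sum>k\<le>n. coeff (f k) d) > 0"
    by (rule sum_pos) (use assms in auto)
  hence pos: "coeff (\<Sum>k\<le>n. f k) d > 0" using c by simp
  hence "d \<le> degree (\<Sum>k\<le>n. f k)" by (intro le_degree) simp
  with le have "degree (\<Sum>k\<le>n. f k) = d" by simp
  with pos show ?thesis by simp
qed

lemma inv: "degree (NFP n) = n + 1 \<and> lead_coeff (NFP n) > 0 \<and>
            degree (NFQ n) = n + 1 \<and> lead_coeff (NFQ n) > 0"
proof (induction n rule: less_induct)
  case (less n)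
  show ?case
  proof (cases n)
    case 0 thus ?thesis by simp
  next
    case (Suc m)
    have Q: "degree (NFQ (Suc m)) = m + 2 \<and> lead_coeff (NFQ (Suc m)) > 0"
      unfolding NFQ.simps
    proof (rule sum_deg)
      fix k assume k: "k \<le> m"
      have a: "degree (NFP k) = k + 1 \<and> lead_coeff (NFP k) > 0" proof - have "k < n" using Suc k by simp from less.IH[OF this] show ?thesis by blast qed
      have b: "degree (NFQ (m - k)) = m - k + 1 \<and> lead_coeff (NFQ (m - k)) > 0"
        proof - have "m - k < n" using Suc k by simp from less.IH[OF this] show ?thesis by blast qed
      have nz: "NFP k \<noteq> 0" "NFQ (m - k) \<noteq> 0" using a b by auto
      show "degree (NFP k * NFQ (m - k)) = m + 2 \<and> lead_coeff (NFP k * NFQ (m - k)) > 0"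
      proof
        show d: "degree (NFP k * NFQ (m - k)) = m + 2" using a b k nz by (simp add: degree_mult_eq)
        have "lead_coeff (NFP k * NFQ (m - k)) = lead_coeff (NFP k) * lead_coeff (NFQ (m - k))"
          by (rule lead_coeff_mult)
        also have "\<dots> > 0" using a b by (intro mult_pos_pos) blast+
        finally show "lead_coeff (NFP k * NFQ (m - k)) > 0" .
      qed
    qed
    have a: "degree (NFP m) = m + 1" using less Suc by auto
    have dc: "degree (pcompose (NFP m) [:1, 1:]) = m + 1"
      using a by (simp add: degree_pcompose)
    have dP: "degree (NFP (Suc m)) = m + 2"
      using Q dc by (simp add: degree_add_eq_right)
    have "coeff (NFP (Suc m)) (m+2) = coeff (NFQ (Suc m)) (m+2)"
      using dc by (simp add: coeff_eq_0)
    hence "lead_coeff (NFP (Suc m)) = lead_coeff (NFQ (Suc m))" using dP Q by metis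
    moreover have "lead_coeff (NFQ (Suc m)) > 0" using Q by (rule conjunct2)
    ultimately have "lead_coeff (NFP (Suc m)) > 0" by metis
    hence "degree (NFP n) = n + 1 \<and> lead_coeff (NFP n) > 0 \<and>
            degree (NFQ n) = n + 1 \<and> lead_coeff (NFQ n) > 0"
      using Q dP Suc by (metis add_2_eq_Suc' Suc_eq_plus1)
    thus ?thesis .
  qed
qed

theorem lemma3:
  fixes n :: nat
  shows "degree (NFP n) = n + 1 \<and> degree (NFQ n) = n + 1"
  using inv by blast

end
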